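(* Assume $n \geq 2k$. Let $y = y_T\, y_{T^*}\, c_{\underline s,\underline t}$ and let $x' = x'_{T,T^*,\underline s,\underline t}$ be the simple tensor defined in the context. Then $e\,y\,x' \neq 0$ if and only if $s_i \neq t_i$ for all pairs $(s_i,t_i)$, $i=1,\dots,k-r$. Hence $eM_{\lambda,\mu} \neq 0$ precisely when this condition can be satisfied (for some choice of $\underline s,\underline t,T,T^*$ with $T,T^*$ of shapes $\lambda,\mu$), and in that case $eM_{\lambda,\mu}$ is the linear span of all the nonzero vectors $e\,y\,x'$, with $y$ and $x'$ of this form and $T,T^*$ of shapes $\lambda,\mu$.
   Context: Let $\mathfrak g = \mathfrak{gl}_n$ (complex), $V=\mathbb C^n$ the natural module with standard basis $v_1,\dots,v_n$, $V^*$ its dual with dual basis $v_1^*,\dots,v_n^*$, and $M = V^{\otimes k}\otimes (V^* )^{\otimes k}$. For $i,j\in\{1,\dots,k\}$ the contraction map $c_{i,j}$ on $M$ is $c_{i,j}(u_1\otimes\cdots\otimes u_k\otimes w_1^*\otimes\cdots\otimes w_k^* ) = \mathrm{tr}(u_iw_j^* )\sum_{\ell=1}^n u_1\otimes\cdots\otimes v_\ell\otimes\cdots\otimes u_k\otimes w_1^*\otimes\cdots\otimes v_\ell^*\otimes\cdots\otimes w_k^*$, with $v_\ell$ in the $i$th slot of $V^{\otimes k}$ and $v_\ell^*$ in the $j$th slot of $(V^* )^{\otimes k}$. Put $p_i = \frac1n c_{i,i}$ (commuting idempotents) and $e = (\mathrm{id}-p_1)(\mathrm{id}-p_2)\cdots(\mathrm{id}-p_k)$,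 so that $eM\cong \mathfrak{sl}_n^{\otimes k}$. For $0\le r\le k$, let $\underline s=\{s_1<\dots<s_{k-r}\}$ and $\underline t=\{t_1,\dots,t_{k-r}\}$ be ordered subsets of $\{1,\dots,k\}$ of size $k-r$, and $c_{\underline s,\underline t} = c_{s_1,t_1}\cdots c_{s_{k-r},t_{k-r}}$. Let $\lambda,\mu$ be partitions of $r$, $T$ a standard tableau of shape $\lambda$ with entries in $\underline s^c=\{1,\dots,k\}\setminus\underline s$, and $T^*$ a standard tableau of shape $\mu$ with entries in $\underline t^c$. The Young symmetrizer is $y_T = (\sum_{\rho\in R_T}\rho)(\sum_{\gamma\in C_T}\mathrm{sgn}(\gamma)\gamma)$ ($R_T$, $C_T$ the row and column groups of $T$), acting on $V^{\otimes k}$ by place permutations; $y_{T^*}$ acts likewise on $(V^* )^{\otimes k}$. The simple tensor $x'=x'_{T,T^*,\underline s,\underline t}=u_1'\otimes\cdots\otimes u_k'\otimes (w_1^* )'\otimes\cdots\otimes (w_k^* )'$ is defined by $u_p' = v_{r+i}$ if $p=s_i$, $u_p'=v_j$ if $p\in\underline s^c$ lies in row $j$ of $T$; $(w_p^* )' = v_{r+i}^*$ if $p=t_i$, $(w_p^* )'=v^*_{n-j+1}$ if $p\in\underline t^c$ lies in row $j$ of $T^*$. (The vector $yx'$ equals $yx$ for the analogous tensor $x$ with $v_1, v_1^*$ in the slots $s_i,t_i$, and is a maximal vector of highest weight $(\lambda,\mu)$.) $M_{\lambda,\mu}$ denotes the span of all such maximal vectors $y x'$ over all pairs $\underline s,\underline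 t$ of ordered subsets of size $k-r$ and all standard tableaux $T$ (resp. $T^*$) of shape $\lambda$ (resp. $\mu$) with entries in $\underline s^c$ (resp. $\underline t^c$); for $n\ge 2k$ these are the irreducible modules for $\mathrm{End}_{\mathfrak g}(M)$. *)

theory Defs
  imports Complex_Main "HOL-Combinatorics.Permutations"
begin

text \<open>Elements of M = V^{\<otimes>k} \<otimes> (V^*)^{\<otimes>k} are represented by their coefficient
functions with respect to the basis v_{a 1} \<otimes> ... \<otimes> v_{a k} \<otimes> v^*_{b 1} \<otimes> ... \<otimes> v^*_{b k},
indexed by pairs (a,b) of functions with a p, b p \<in> {1..n} for p \<in> {1..k} and
a p = b p = 0 otherwise (slots and basis indices are 1-based, as in the paper).\<close>

type_synonym tens = "(nat \<Rightarrow> nat) \<times> (nat \<Rightarrow> nat) \<Rightarrow> complex"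

definition idx :: "nat \<Rightarrow> nat \<Rightarrow> ((nat \<Rightarrow> nat) \<times> (nat \<Rightarrow> nat)) set" where
  "idx n k = {(a,b). (\<forall>p\<in>{1..k}. a p \<in> {1..n} \<and> b p \<in> {1..n}) \<and>
                     (\<forall>p. p \<notin> {1..k} \<longrightarrow> a p = 0 \<and> b p = 0)}"

definition contr :: "nat \<Rightarrow> nat \<Rightarrow> nat \<Rightarrow> nat \<Rightarrow> tens \<Rightarrow> tens" where
  "contr n k i j x = (\<lambda>(a,b). if (a,b) \<in> idx n k \<and> a i = b j
       then (\<Sum>m\<in>{1..n}. x (a(i := m), b(j := m))) else 0)"

definition one_minus_p :: "nat \<Rightarrow> nat \<Rightarrow> nat \<Rightarrow> tens \<Rightarrow> tens" where
  "one_minus_p n k i x = (\<lambda>z. x z - (1 / of_nat n) * contr n k i i x z)"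

definition emap :: "nat \<Rightarrow> nat \<Rightarrow> tens \<Rightarrow> tens" where
  "emap n k x = foldr (one_minus_p n k) [1..<k+1] x"

definition contr_list :: "nat \<Rightarrow> nat \<Rightarrow> nat list \<Rightarrow> nat list \<Rightarrow> tens \<Rightarrow> tens" where
  "contr_list n k s t x = foldr (\<lambda>(i,j). contr n k i j) (zip s t) x"

text \<open>Partitions and standard tableaux (a tableau is the list of its rows).\<close>
definition is_partition :: "nat \<Rightarrow> nat list \<Rightarrow> bool" where
  "is_partition r lam \<longleftrightarrow> sorted_wrt (\<ge>) lam \<and> 0 \<notin> set lam \<and> sum_list lam = r"

definition standard_tableau :: "nat list list \<Rightarrow> nat list \<Rightarrow> nat set \<Rightarrow> bool" where
  "standard_tableau T lam S \<longleftrightarrow> map length T = lam \<and>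
     (\<forall>row\<in>set T. sorted_wrt (<) row) \<and>
     (\<forall>i j. i + 1 < length T \<and> j < length (T ! (i+1)) \<longrightarrow> T ! i ! j < T ! (i+1) ! j) \<and>
     distinct (concat T) \<and> set (concat T) = S"

definition col_set :: "nat list list \<Rightarrow> nat \<Rightarrow> nat set" where
  "col_set T j = {T ! i ! j | i. i < length T \<and> j < length (T ! i)}"

definition row_group :: "nat list list \<Rightarrow> (nat \<Rightarrow> nat) set" where
  "row_group T = {\<sigma>. \<sigma> permutes set (concat T) \<and> (\<forall>row\<in>set T. \<sigma> ` set row = set row)}"

definition col_group :: "nat list list \<Rightarrow> (nat \<Rightarrow> nat) set" where
  "col_group T = {\<sigma>. \<sigma> permutes set (concat T) \<and> (\<forall>j. \<sigma> ` col_set T j = col_set T j)}"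

text \<open>Place permutation \<sigma> acts by (\<sigma> x)(a,b) = x (a \<circ> \<sigma>, b) on the V-factors
  (i.e. \<sigma> sends the vector in slot p to slot \<sigma> p; a left action), and likewise
  on the V^*-factors.\<close>
definition youngV :: "nat list list \<Rightarrow> tens \<Rightarrow> tens" where
  "youngV T x = (\<lambda>(a,b). \<Sum>\<rho>\<in>row_group T. \<Sum>\<gamma>\<in>col_group T.
       of_int (sign \<gamma>) * x (a \<circ> (\<rho> \<circ> \<gamma>), b))"

definition youngVs :: "nat list list \<Rightarrow> tens \<Rightarrow> tens" where
  "youngVs T x = (\<lambda>(a,b). \<Sum>\<rho>\<in>row_group T. \<Sum>\<gamma>\<in>col_group T.
       of_int (sign \<gamma>) * x (a, b \<circ> (\<rho> \<circ> \<gamma>)))"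

definition yop :: "nat \<Rightarrow> nat \<Rightarrow> nat list list \<Rightarrow> nat list list \<Rightarrow> nat list \<Rightarrow> nat list \<Rightarrow> tens \<Rightarrow> tens" where
  "yop n k T Ts s t x = youngV T (youngVs Ts (contr_list n k s t x))"

text \<open>1-based row index of entry p in tableau T\<close>
definition row_of :: "nat list list \<Rightarrow> nat \<Rightarrow> nat" where
  "row_of T p = (LEAST j. j < length T \<and> p \<in> set (T ! j)) + 1"

text \<open>1-based position of p in list xs\<close>
definition pos :: "nat list \<Rightarrow> nat \<Rightarrow> nat" where
  "pos xs p = (LEAST i. i < length xs \<and> xs ! i = p) + 1"

definition xprime :: "nat \<Rightarrow> nat \<Rightarrow> nat list list \<Rightarrow> nat list list \<Rightarrow> nat list \<Rightarrow> nat list \<Rightarrow> tens" where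
  "xprime n k T Ts s t =
     (let r = k - length s;
          a0 = (\<lambda>p. if p \<in> set s then r + pos s p
                    else if p \<in> set (concat T) then row_of T p else 0);
          b0 = (\<lambda>p. if p \<in> set t then r + pos t p
                    else if p \<in> set (concat Ts) then n - row_of Ts p + 1 else 0)
      in (\<lambda>z. if z = (a0, b0) then 1 else 0))"

definition data_ok :: "nat \<Rightarrow> nat \<Rightarrow> nat \<Rightarrow> nat list \<Rightarrow> nat list \<Rightarrow> nat list \<Rightarrow> nat list
                       \<Rightarrow> nat list list \<Rightarrow> nat list list \<Rightarrow> bool" where
  "data_ok n k r s t lam mu T Ts \<longleftrightarrow> r \<le> k \<and> length s = k - r \<and> length t = k - r \<and>
     sorted_wrt (<) s \<and> distinct t \<and> set s \<subseteq> {1..k} \<and> set t \<subseteq> {1..k} \<and>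
     is_partition r lam \<and> is_partition r mu \<and>
     standard_tableau T lam ({1..k} - set s) \<and> standard_tableau Ts mu ({1..k} - set t)"

definition lin_span :: "tens set \<Rightarrow> tens set" where
  "lin_span S = {f. \<exists>F c. finite F \<and> F \<subseteq> S \<and> f = (\<lambda>z. \<Sum>v\<in>F. c v * v z)}"

definition Mlm :: "nat \<Rightarrow> nat \<Rightarrow> nat list \<Rightarrow> nat list \<Rightarrow> tens set" where
  "Mlm n k lam mu = lin_span {yop n k T Ts s t (xprime n k T Ts s t) | s t T Ts.
       data_ok n k (sum_list lam) s t lam mu T Ts}"

end

theory Submission
  imports Defs
begin


lemma concat_row_unique:
  assumes "distinct (concat T)" "i < length T" "j < length T" "p \<in> set (T!i)" "p \<in> set (T!j)"
  shows "i = j"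
  using assms
proof (induction T arbitrary: i j)
  case Nil then show ?case by simp
next
  case (Cons x T)
  show ?case
  proof (cases i)
    case 0
    then show ?thesis using Cons.prems
      by (cases j) (auto dest!: nth_mem[of _ T] simp: disjoint_iff)
  next
    case (Suc i')
    then show ?thesis using Cons
      by (cases j) (auto dest!: nth_mem[of _ T] simp: disjoint_iff)
  qed
qed

lemma row_of_nth:
  assumes "distinct (concat T)" "i < length T" "p \<in> set (T!i)"
  shows "row_of T p = i + 1"
proof -
  have "(LEAST j. j < length T \<and> p \<in> set (T ! j)) = i"
    by (rule Least_equality) (use assms concat_row_unique[OF assms(1)] in force)+
  then show ?thesis by (simp add: row_of_def)
qed

lemma in_concat_row:
  assumes "p \<in> set (concat T)"
  obtains i where "i < length T" "p \<in> set (T!i)"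
proof -
  from assms obtain xs where "xs \<in> set T" "p \<in> set xs" by auto
  then show ?thesis using that by (auto simp: in_set_conv_nth)
qed

lemma row_of_bound:
  assumes "p \<in> set (concat T)" "distinct (concat T)"
  shows "row_of T p \<le> length T" "1 \<le> row_of T p"
proof -
  obtain i where "i < length T" "p \<in> set (T!i)" using in_concat_row[OF assms(1)] by blast
  then show "row_of T p \<le> length T" "1 \<le> row_of T p" using row_of_nth[OF assms(2)] by auto
qed

lemma pos_nth:
  assumes "distinct xs" "i < length xs"
  shows "pos xs (xs!i) = i + 1"
proof -
  have "(LEAST j. j < length xs \<and> xs ! j = xs ! i) = i"
    by (rule Least_equality) (use assms nth_eq_iff_index_eq in auto)
  then show ?thesis by (simp add: pos_def)
qed

lemma length_le_sum_list:
  assumes "0 \<notin> set (xs :: nat list)"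
  shows "length xs \<le> sum_list xs"
  using assms by (induction xs) (auto simp: Suc_le_eq)


definition Pp :: "nat \<Rightarrow> nat \<Rightarrow> nat \<Rightarrow> tens \<Rightarrow> bool" where
 "Pp n k p w \<longleftrightarrow> (\<forall>a b. w (a,b) \<noteq> 0 \<longrightarrow> (a,b) \<in> idx n k \<and> a p = b p) \<and>
    (\<forall>a b m m'. m \<in> {1..n} \<longrightarrow> m' \<in> {1..n} \<longrightarrow> w (a(p:=m), b(p:=m)) = w (a(p:=m'), b(p:=m')))"

lemma idx_upd_iff:
  assumes "p \<in> {1..k}" "m1 \<in> {1..n}" "m2 \<in> {1..n}" "m3 \<in> {1..n}" "m4 \<in> {1..n}"
  shows "((a(p:=m1), b(p:=m2)) \<in> idx n k) = ((a(p:=m3), b(p:=m4)) \<in> idx n k)"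
  using assms unfolding idx_def by auto

lemma Pp_zero: "Pp n k p (\<lambda>_. 0)"
  by (simp add: Pp_def)

lemma contr_Pp_same:
  assumes "p \<in> {1..k}"
  shows "Pp n k p (contr n k p p w)"
proof -
  have P1: "(a, b) \<in> idx n k \<and> a p = b p" if "contr n k p p w (a, b) \<noteq> 0" for a b
    using that by (auto simp: contr_def split: if_splits)
  have P2: "contr n k p p w (a(p := m), b(p := m)) = contr n k p p w (a(p := m'), b(p := m'))"
    if mm: "m \<in> {1..n}" "m' \<in> {1..n}" for a b m m'
  proof -
    have "((a(p:=m), b(p:=m)) \<in> idx n k) = ((a(p:=m'), b(p:=m')) \<in> idx n k)"
      using idx_upd_iff[OF assms mm(1) mm(1) mm(2) mm(2)] mm by blast
    then show ?thesis by (simp add: contr_def)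
  qed
  show ?thesis unfolding Pp_def using P1 P2 by blast
qed

lemma contr_Pp_other:
  assumes "p \<in> {1..k}" "i \<noteq> p" "j \<noteq> p" "Pp n k p w"
  shows "Pp n k p (contr n k i j w)"
proof -
  have P1: "(a, b) \<in> idx n k \<and> a p = b p" if "contr n k i j w (a, b) \<noteq> 0" for a b
  proof -
    have h: "(a,b) \<in> idx n k" "(\<Sum>m\<in>{1..n}. w (a(i := m), b(j := m))) \<noteq> 0"
      using that by (auto simp: contr_def split: if_splits)
    obtain x where x: "(a,b) \<in> idx n k" "w (a(i:=x), b(j:=x)) \<noteq> 0"
      using sum.not_neutral_contains_not_neutral[OF h(2)] h(1) by blast
    then have "(a(i:=x)) p = (b(j:=x)) p" using assms(4) unfolding Pp_def by blast
    then show ?thesis using x assms(2,3) by simp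
  qed
  have P2: "contr n k i j w (a(p := m), b(p := m)) = contr n k i j w (a(p := m'), b(p := m'))"
    if mm: "m \<in> {1..n}" "m' \<in> {1..n}" for a b m m'
  proof -
  have "((a(p:=m), b(p:=m)) \<in> idx n k) = ((a(p:=m'), b(p:=m')) \<in> idx n k)"
    using idx_upd_iff[OF assms(1) mm(1) mm(1) mm(2) mm(2)] mm by blast
  moreover have "w (a(p:=m, i:=x), b(p:=m, j:=x)) = w (a(p:=m', i:=x), b(p:=m', j:=x))" for x
  proof -
    have "w (a(p:=m, i:=x), b(p:=m, j:=x)) = w ((a(i:=x))(p:=m), (b(j:=x))(p:=m))"
      using assms(2,3) by (simp add: fun_upd_twist)
    also have "\<dots> = w ((a(i:=x))(p:=m'), (b(j:=x))(p:=m'))"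
      using assms(4) mm unfolding Pp_def by blast
    also have "\<dots> = w (a(p:=m', i:=x), b(p:=m', j:=x))"
      using assms(2,3) by (simp add: fun_upd_twist)
    finally show ?thesis .
  qed
  ultimately show ?thesis
    using assms(2,3) by (simp add: contr_def)
  qed
  show ?thesis unfolding Pp_def using P1 P2 by blast
qed

lemma omp_Pp:
  assumes "p \<in> {1..k}" "q \<noteq> p" "Pp n k p w"
  shows "Pp n k p (one_minus_p n k q w)"
proof -
  have c: "Pp n k p (contr n k q q w)" using contr_Pp_other assms by blast
  have e: "\<And>z. one_minus_p n k q w z = w z - 1 / of_nat n * contr n k q q w z"
    by (simp add: one_minus_p_def)
  have P1: "(a, b) \<in> idx n k \<and> a p = b p" if "one_minus_p n k q w (a,b) \<noteq> 0" for a b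
  proof -
    have "w (a,b) \<noteq> 0 \<or> contr n k q q w (a, b) \<noteq> 0" using that e by auto
    then show ?thesis using c assms(3) unfolding Pp_def by blast
  qed
  have P2: "one_minus_p n k q w (a(p := m), b(p := m)) = one_minus_p n k q w (a(p := m'), b(p := m'))"
    if "m \<in> {1..n}" "m' \<in> {1..n}" for a b m m'
    using c assms(3) that unfolding Pp_def e by metis
  show ?thesis unfolding Pp_def using P1 P2 by blast
qed

lemma omp_kill:
  assumes "p \<in> {1..k}" "n > 0" "Pp n k p w"
  shows "one_minus_p n k p w = (\<lambda>_. 0)"
proof (rule ext, clarify)
  fix a b
  show "one_minus_p n k p w (a, b) = 0"
  proof (cases "(a,b) \<in> idx n k \<and> a p = b p")
    case True
    then have ap: "a p \<in> {1..n}" using assms(1) by (auto simp: idx_def)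
    have bp: "b p = a p" using True by simp
    have "\<forall>m\<in>{1..n}. w (a(p:=m), b(p:=m)) = w (a(p:=a p), b(p:=a p))"
      using assms(3) ap unfolding Pp_def by blast
    moreover have "a(p:=a p) = a" "b(p:=a p) = b" using bp by auto
    ultimately have "\<forall>m\<in>{1..n}. w (a(p:=m), b(p:=m)) = w (a, b)" by simp
    then have "(\<Sum>m\<in>{1..n}. w (a(p:=m), b(p:=m))) = of_nat n * w (a, b)"
      using True by simp
    then show ?thesis using True assms(2) by (simp add: one_minus_p_def contr_def)
  next
    case False
    then have "w (a,b) = 0" using assms(3) unfolding Pp_def by blast
    then show ?thesis using False by (auto simp: one_minus_p_def contr_def)
  qed
qed

lemma contr_zero: "contr n k i j (\<lambda>_. 0) = (\<lambda>_. 0)"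
  by (auto simp: contr_def)

lemma omp_zero: "one_minus_p n k q (\<lambda>_. 0) = (\<lambda>_. 0)"
  by (simp add: one_minus_p_def contr_zero)

lemma foldr_omp_Pp:
  assumes "p \<in> {1..k}" "n > 0" "Pp n k p x"
  shows "Pp n k p (foldr (one_minus_p n k) L x) \<and> (p \<in> set L \<longrightarrow> foldr (one_minus_p n k) L x = (\<lambda>_. 0))"
proof (induction L)
  case Nil then show ?case using assms by simp
next
  case (Cons q L)
  show ?case
  proof (cases "q = p")
    case True
    then show ?thesis using Cons omp_kill[OF assms(1,2)] Pp_zero by simp
  next
    case False
    then show ?thesis using Cons omp_Pp[OF assms(1) False] omp_zero by auto
  qed
qed

lemma emap_kill:
  assumes "p \<in> {1..k}" "n > 0" "Pp n k p x"
  shows "emap n k x = (\<lambda>_. 0)"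
proof -
  have "p \<in> set [1..<k+1]" using assms(1) by auto
  then show ?thesis using foldr_omp_Pp[OF assms, of "[1..<k+1]"] by (simp add: emap_def)
qed

lemma emap_fix:
  assumes "\<forall>p\<in>{1..k}. a p \<noteq> b p"
  shows "emap n k x (a,b) = x (a,b)"
proof -
  have "set L \<subseteq> {1..k} \<Longrightarrow> foldr (one_minus_p n k) L x (a,b) = x (a,b)" for L
  proof (induction L)
    case Nil then show ?case by simp
  next
    case (Cons q L)
    then have "a q \<noteq> b q" using assms by auto
    then show ?case using Cons by (simp add: one_minus_p_def contr_def)
  qed
  moreover have "set [1..<k+1] \<subseteq> {1..k}" by auto
  ultimately show ?thesis by (simp add: emap_def)
qed


lemma idx_perm_a:
  assumes "\<sigma> permutes S" "S \<subseteq> {1..k}" "(a \<circ> \<sigma>, b) \<in> idx n k"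
  shows "(a, b) \<in> idx n k"
proof -
  have P: "\<sigma> permutes {1..k}" using permutes_subset[OF assms(1,2)] .
  have "a q \<in> {1..n}" if "q \<in> {1..k}" for q
  proof -
    have "inv \<sigma> q \<in> {1..k}" using permutes_in_image[OF permutes_inv[OF P]] that by blast
    moreover have "a q = (a \<circ> \<sigma>) (inv \<sigma> q)" using P by (simp add: permutes_inverses)
    ultimately show ?thesis using assms(3) by (auto simp: idx_def)
  qed
  moreover have "a q = 0" if "q \<notin> {1..k}" for q
    using assms(3) that permutes_not_in[OF P that] by (auto simp: idx_def)
  ultimately show ?thesis using assms(3) by (auto simp: idx_def)
qed

lemma idx_perm_b:
  assumes "\<sigma> permutes S" "S \<subseteq> {1..k}" "(a, b \<circ> \<sigma>) \<in> idx n k"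
  shows "(a, b) \<in> idx n k"
proof -
  have P: "\<sigma> permutes {1..k}" using permutes_subset[OF assms(1,2)] .
  have "b q \<in> {1..n}" if "q \<in> {1..k}" for q
  proof -
    have "inv \<sigma> q \<in> {1..k}" using permutes_in_image[OF permutes_inv[OF P]] that by blast
    moreover have "b q = (b \<circ> \<sigma>) (inv \<sigma> q)" using P by (simp add: permutes_inverses)
    ultimately show ?thesis using assms(3) by (auto simp: idx_def)
  qed
  moreover have "b q = 0" if "q \<notin> {1..k}" for q
    using assms(3) that permutes_not_in[OF P that] by (auto simp: idx_def)
  ultimately show ?thesis using assms(3) by (auto simp: idx_def)
qed

lemma upd_comp_perm:
  assumes "\<sigma> permutes S" "p \<notin> S"
  shows "(a(p:=m)) \<circ> \<sigma> = (a \<circ> \<sigma>)(p:=m)"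
proof
  fix x
  show "(a(p := m) \<circ> \<sigma>) x = ((a \<circ> \<sigma>)(p := m)) x"
  proof (cases "x = p")
    case True then show ?thesis using permutes_not_in[OF assms] by simp
  next
    case False
    have "\<sigma> x \<noteq> p"
    proof
      assume "\<sigma> x = p"
      then have "\<sigma> x = \<sigma> p" using permutes_not_in[OF assms] by simp
      then show False using False permutes_inj[OF assms(1)] by (auto dest: injD)
    qed
    then show ?thesis using False by simp
  qed
qed

lemma row_group_perm: "\<rho> \<in> row_group T \<Longrightarrow> \<rho> permutes set (concat T)"
  by (simp add: row_group_def)
lemma col_group_perm: "\<gamma> \<in> col_group T \<Longrightarrow> \<gamma> permutes set (concat T)"
  by (simp add: col_group_def)

lemma youngV_Pp:
  assumes "p \<notin> set (concat T)" "set (concat T) \<subseteq> {1..k}" "Pp n k p w"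
  shows "Pp n k p (youngV T w)"
proof -
  have perm: "\<rho> \<circ> \<gamma> permutes set (concat T)" if "\<rho> \<in> row_group T" "\<gamma> \<in> col_group T" for \<rho> \<gamma>
    using permutes_compose[OF col_group_perm[OF that(2)] row_group_perm[OF that(1)]] .
  have P1: "(a, b) \<in> idx n k \<and> a p = b p" if "youngV T w (a, b) \<noteq> 0" for a b
  proof -
    have "(\<Sum>\<rho>\<in>row_group T. \<Sum>\<gamma>\<in>col_group T. of_int (sign \<gamma>) * w (a \<circ> (\<rho> \<circ> \<gamma>), b)) \<noteq> 0"
      using that by (simp add: youngV_def)
    then obtain \<rho> where r: "\<rho> \<in> row_group T"
      "(\<Sum>\<gamma>\<in>col_group T. of_int (sign \<gamma>) * w (a \<circ> (\<rho> \<circ> \<gamma>), b)) \<noteq> 0"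
      by (rule sum.not_neutral_contains_not_neutral)
    from r(2) obtain \<gamma> where g: "\<gamma> \<in> col_group T" "of_int (sign \<gamma>) * w (a \<circ> (\<rho> \<circ> \<gamma>), b) \<noteq> 0"
      by (rule sum.not_neutral_contains_not_neutral)
    then have wn: "w (a \<circ> (\<rho> \<circ> \<gamma>), b) \<noteq> 0" by auto
    have pm: "\<rho> \<circ> \<gamma> permutes set (concat T)" using perm r g by blast
    have "(a \<circ> (\<rho> \<circ> \<gamma>), b) \<in> idx n k" "(a \<circ> (\<rho> \<circ> \<gamma>)) p = b p"
      using wn assms(3) unfolding Pp_def by blast+
    then show ?thesis using idx_perm_a[OF pm assms(2)] permutes_not_in[OF pm assms(1)] by simp
  qed
  have P2: "youngV T w (a(p := m), b(p := m)) = youngV T w (a(p := m'), b(p := m'))"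
    if mm: "m \<in> {1..n}" "m' \<in> {1..n}" for a b m m'
  proof -
    have "w (a(p := m) \<circ> (\<rho> \<circ> \<gamma>), b(p := m)) = w (a(p := m') \<circ> (\<rho> \<circ> \<gamma>), b(p := m'))"
      if "\<rho> \<in> row_group T" "\<gamma> \<in> col_group T" for \<rho> \<gamma>
    proof -
      have pm: "\<rho> \<circ> \<gamma> permutes set (concat T)" using perm that by blast
      show ?thesis unfolding upd_comp_perm[OF pm assms(1)]
        using assms(3) mm unfolding Pp_def by blast
    qed
    then show ?thesis by (simp add: youngV_def)
  qed
  show ?thesis unfolding Pp_def using P1 P2 by blast
qed

lemma youngVs_Pp:
  assumes "p \<notin> set (concat T)" "set (concat T) \<subseteq> {1..k}" "Pp n k p w"
  shows "Pp n k p (youngVs T w)"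
proof -
  have perm: "\<rho> \<circ> \<gamma> permutes set (concat T)" if "\<rho> \<in> row_group T" "\<gamma> \<in> col_group T" for \<rho> \<gamma>
    using permutes_compose[OF col_group_perm[OF that(2)] row_group_perm[OF that(1)]] .
  have P1: "(a, b) \<in> idx n k \<and> a p = b p" if "youngVs T w (a, b) \<noteq> 0" for a b
  proof -
    have "(\<Sum>\<rho>\<in>row_group T. \<Sum>\<gamma>\<in>col_group T. of_int (sign \<gamma>) * w (a, b \<circ> (\<rho> \<circ> \<gamma>))) \<noteq> 0"
      using that by (simp add: youngVs_def)
    then obtain \<rho> where r: "\<rho> \<in> row_group T"
      "(\<Sum>\<gamma>\<in>col_group T. of_int (sign \<gamma>) * w (a, b \<circ> (\<rho> \<circ> \<gamma>))) \<noteq> 0"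
      by (rule sum.not_neutral_contains_not_neutral)
    from r(2) obtain \<gamma> where g: "\<gamma> \<in> col_group T" "of_int (sign \<gamma>) * w (a, b \<circ> (\<rho> \<circ> \<gamma>)) \<noteq> 0"
      by (rule sum.not_neutral_contains_not_neutral)
    then have wn: "w (a, b \<circ> (\<rho> \<circ> \<gamma>)) \<noteq> 0" by auto
    have pm: "\<rho> \<circ> \<gamma> permutes set (concat T)" using perm r g by blast
    have "(a, b \<circ> (\<rho> \<circ> \<gamma>)) \<in> idx n k" "a p = (b \<circ> (\<rho> \<circ> \<gamma>)) p"
      using wn assms(3) unfolding Pp_def by blast+
    then show ?thesis using idx_perm_b[OF pm assms(2)] permutes_not_in[OF pm assms(1)] by simp
  qed
  have P2: "youngVs T w (a(p := m), b(p := m)) = youngVs T w (a(p := m'), b(p := m'))"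
    if mm: "m \<in> {1..n}" "m' \<in> {1..n}" for a b m m'
  proof -
    have "w (a(p := m), b(p := m) \<circ> (\<rho> \<circ> \<gamma>)) = w (a(p := m'), b(p := m') \<circ> (\<rho> \<circ> \<gamma>))"
      if "\<rho> \<in> row_group T" "\<gamma> \<in> col_group T" for \<rho> \<gamma>
    proof -
      have pm: "\<rho> \<circ> \<gamma> permutes set (concat T)" using perm that by blast
      show ?thesis unfolding upd_comp_perm[OF pm assms(1)]
        using assms(3) mm unfolding Pp_def by blast
    qed
    then show ?thesis by (simp add: youngVs_def)
  qed
  show ?thesis unfolding Pp_def using P1 P2 by blast
qed

lemma contr_foldr_Pp:
  assumes "p \<in> {1..k}" "distinct (map fst L)" "distinct (map snd L)" "(p,p) \<in> set L"
  shows "Pp n k p (foldr (\<lambda>(i,j). contr n k i j) L x)"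
  using assms(2-4)
proof (induction L)
  case Nil then show ?case by simp
next
  case (Cons ij L)
  obtain i j where ij: "ij = (i,j)" by force
  show ?case
  proof (cases "(i,j) = (p,p)")
    case True
    then show ?thesis using ij contr_Pp_same[OF assms(1)] by simp
  next
    case False
    then have inL: "(p,p) \<in> set L" using Cons.prems ij by auto
    have "i \<noteq> p" using Cons.prems(1) ij inL by (auto simp: image_iff)
    moreover have "j \<noteq> p" using Cons.prems(2) ij inL by (auto simp: image_iff)
    moreover have "Pp n k p (foldr (\<lambda>(i,j). contr n k i j) L x)" using Cons inL by auto
    ultimately show ?thesis using ij contr_Pp_other[OF assms(1)] by simp
  qed
qed


definition Qs :: "nat set \<Rightarrow> nat set \<Rightarrow> (nat \<Rightarrow> nat) \<Rightarrow> (nat \<Rightarrow> nat) \<Rightarrow> tens \<Rightarrow> bool" where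
 "Qs S S' a0 b0 w \<longleftrightarrow> (\<forall>a b. w (a,b) \<noteq> 0 \<longrightarrow> (\<forall>p. p \<notin> S \<longrightarrow> a p = a0 p) \<and> (\<forall>p. p \<notin> S' \<longrightarrow> b p = b0 p))"

lemma contr_foldr_val:
  assumes "distinct (map fst L)" "distinct (map snd L)"
    "\<forall>(i,j)\<in>set L. a0 i = b0 j \<and> i \<in> {1..k}" "(a0,b0) \<in> idx n k"
  shows "Qs (fst ` set L) (snd ` set L) a0 b0 (foldr (\<lambda>(i,j). contr n k i j) L (\<lambda>z. if z = (a0,b0) then 1 else 0))
    \<and> foldr (\<lambda>(i,j). contr n k i j) L (\<lambda>z. if z = (a0,b0) then 1 else 0) (a0,b0) = 1"
  using assms(1-3)
proof (induction L)
  case Nil then show ?case by (auto simp: Qs_def)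
next
  case (Cons ij L)
  obtain i j where ij: "ij = (i,j)" by force
  define w where "w = foldr (\<lambda>(i,j). contr n k i j) L (\<lambda>z. if z = (a0,b0) then 1 else 0)"
  have IH: "Qs (fst ` set L) (snd ` set L) a0 b0 w" "w (a0,b0) = 1"
    using Cons unfolding w_def by auto
  have iL: "i \<notin> fst ` set L" using Cons.prems(1) ij by auto
  have ij0: "a0 i = b0 j" "i \<in> {1..k}" using Cons.prems(3) ij by auto
  have Q: "Qs (fst ` set (ij # L)) (snd ` set (ij # L)) a0 b0 (contr n k i j w)"
    unfolding Qs_def
  proof (intro allI impI)
    fix a b assume "contr n k i j w (a, b) \<noteq> 0"
    then have h: "(\<Sum>m\<in>{1..n}. w (a(i := m), b(j := m))) \<noteq> 0"
      by (auto simp: contr_def split: if_splits)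
    obtain x where "w (a(i:=x), b(j:=x)) \<noteq> 0"
      using sum.not_neutral_contains_not_neutral[OF h] by blast
    then have "(\<forall>p. p \<notin> fst ` set L \<longrightarrow> (a(i:=x)) p = a0 p) \<and> (\<forall>p. p \<notin> snd ` set L \<longrightarrow> (b(j:=x)) p = b0 p)"
      using IH(1) unfolding Qs_def by blast
    then show "(\<forall>p. p \<notin> fst ` set (ij # L) \<longrightarrow> a p = a0 p) \<and> (\<forall>p. p \<notin> snd ` set (ij # L) \<longrightarrow> b p = b0 p)"
      using ij by (auto split: if_splits)
  qed
  have terms: "w (a0(i := x), b0(j := x)) = (if x = a0 i then 1 else 0)" for x
  proof (cases "x = a0 i")
    case True
    then have "a0(i := x) = a0" "b0(j := x) = b0" using ij0 by auto
    then show ?thesis using IH(2) True by simp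
  next
    case False
    have "w (a0(i := x), b0(j := x)) = 0"
    proof (rule ccontr)
      assume "w (a0(i := x), b0(j := x)) \<noteq> 0"
      then have "(a0(i:=x)) i = a0 i" using IH(1) iL unfolding Qs_def by blast
      then show False using False by simp
    qed
    then show ?thesis using False by simp
  qed
  have a0i: "a0 i \<in> {1..n}" using assms(4) ij0(2) by (auto simp: idx_def)
  have "contr n k i j w (a0,b0) = (\<Sum>m\<in>{1..n}. w (a0(i := m), b0(j := m)))"
    using assms(4) ij0 by (simp add: contr_def)
  also have "\<dots> = 1" using a0i by (simp add: terms)
  finally show ?case using Q ij unfolding w_def by simp
qed

lemma row_inv:
  assumes "distinct (concat T)" "\<rho> \<in> row_group T" "\<forall>p\<in>set (concat T). a p = h (row_of T p)"
  shows "a \<circ> \<rho> = a"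
proof
  fix p
  have perm: "\<rho> permutes set (concat T)" using assms(2) by (simp add: row_group_def)
  show "(a \<circ> \<rho>) p = a p"
  proof (cases "p \<in> set (concat T)")
    case False then show ?thesis using permutes_not_in[OF perm False] by simp
  next
    case True
    obtain i where i: "i < length T" "p \<in> set (T!i)" using in_concat_row[OF True] by blast
    have "\<rho> ` set (T!i) = set (T!i)" using assms(2) i(1) by (simp add: row_group_def)
    then have "\<rho> p \<in> set (T!i)" using i(2) by blast
    then have "row_of T (\<rho> p) = row_of T p" using row_of_nth[OF assms(1) i(1)] i(2) by simp
    moreover have "\<rho> p \<in> set (concat T)" using True permutes_in_image[OF perm] by blast
    ultimately show ?thesis using assms(3) True by (metis comp_apply)
  qed
qed

lemma col_id:
  assumes "distinct (concat T)" "\<gamma> \<in> col_group T" "\<forall>p\<in>set (concat T). a p = h (row_of T p)"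
    "inj_on h {1..length T}" "a \<circ> \<gamma> = a"
  shows "\<gamma> = id"
proof
  fix p
  have perm: "\<gamma> permutes set (concat T)" using assms(2) by (simp add: col_group_def)
  show "\<gamma> p = id p"
  proof (cases "p \<in> set (concat T)")
    case False then show ?thesis using permutes_not_in[OF perm False] by simp
  next
    case True
    obtain i where i: "i < length T" "p \<in> set (T!i)" using in_concat_row[OF True] by blast
    then obtain j where j: "j < length (T!i)" "p = T!i!j" by (auto simp: in_set_conv_nth)
    have "p \<in> col_set T j" using i j by (auto simp: col_set_def)
    moreover have "\<gamma> ` col_set T j = col_set T j" using assms(2) by (simp add: col_group_def)
    ultimately have "\<gamma> p \<in> col_set T j" by blast
    then obtain i' where i': "i' < length T" "j < length (T!i')" "\<gamma> p = T!i'!j"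
      by (auto simp: col_set_def)
    have r1: "row_of T p = i + 1" using row_of_nth[OF assms(1) i] .
    have r2: "row_of T (\<gamma> p) = i' + 1" using row_of_nth[OF assms(1) i'(1)] i' by simp
    have gin: "\<gamma> p \<in> set (concat T)" using True permutes_in_image[OF perm] by blast
    have "a (\<gamma> p) = a p" using assms(5) by (metis comp_apply)
    moreover have "a (\<gamma> p) = h (i' + 1)" using assms(3) gin r2 by metis
    moreover have "a p = h (i + 1)" using assms(3) True r1 by metis
    ultimately have "h (i' + 1) = h (i + 1)" by simp
    then have "i' = i" using assms(4) i(1) i'(1) by (auto dest: inj_onD)
    then show ?thesis using i' j by simp
  qed
qed


lemma data_facts:
  assumes "data_ok n k r s t lam mu T Ts"
  shows "r \<le> k" "length s = k - r" "length t = k - r" "distinct s" "distinct t"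
    "set s \<subseteq> {1..k}" "set t \<subseteq> {1..k}"
    "distinct (concat T)" "set (concat T) = {1..k} - set s" "length T \<le> r"
    "distinct (concat Ts)" "set (concat Ts) = {1..k} - set t" "length Ts \<le> r"
proof -
  show "r \<le> k" "length s = k - r" "length t = k - r" "distinct t"
    "set s \<subseteq> {1..k}" "set t \<subseteq> {1..k}"
    "distinct (concat T)" "set (concat T) = {1..k} - set s"
    "distinct (concat Ts)" "set (concat Ts) = {1..k} - set t"
    using assms by (auto simp: data_ok_def standard_tableau_def)
  show "distinct s" using assms by (auto simp: data_ok_def strict_sorted_iff)
  have "length T = length lam" "0 \<notin> set lam" "sum_list lam = r"
    using assms by (auto simp: data_ok_def standard_tableau_def is_partition_def dest: arg_cong[of _ _ length])
  then show "length T \<le> r" using length_le_sum_list by metis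
  have "length Ts = length mu" "0 \<notin> set mu" "sum_list mu = r"
    using assms by (auto simp: data_ok_def standard_tableau_def is_partition_def dest: arg_cong[of _ _ length])
  then show "length Ts \<le> r" using length_le_sum_list by metis
qed

lemma groups_fin:
  "finite (row_group T)" "finite (col_group T)" "id \<in> row_group T" "id \<in> col_group T"
proof -
  have f: "finite {\<sigma>. \<sigma> permutes set (concat T)}" by (rule finite_permutations) simp
  show "finite (row_group T)" by (rule finite_subset[OF _ f]) (auto simp: row_group_def)
  show "finite (col_group T)" by (rule finite_subset[OF _ f]) (auto simp: col_group_def)
  show "id \<in> row_group T" "id \<in> col_group T" by (auto simp: row_group_def col_group_def)
qed

lemma sum_sign_delta:
  assumes "finite G" "id \<in> G"
  shows "(\<Sum>\<gamma>\<in>G. of_int (sign \<gamma>) * (if \<gamma> = id then c else 0)) = (c :: complex)"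
proof -
  have "(\<Sum>\<gamma>\<in>G. of_int (sign \<gamma>) * (if \<gamma> = id then c else 0)) = (\<Sum>\<gamma>\<in>G. if \<gamma> = id then of_int (sign \<gamma>) * c else 0)"
    by (rule sum.cong) auto
  also have "\<dots> = c" using assms by simp
  finally show ?thesis .
qed

lemma nonzero_dir:
  assumes n2k: "2 * k \<le> n" and D: "data_ok n k r s t lam mu T Ts"
    and cond: "\<forall>i < k - r. s ! i \<noteq> t ! i"
  shows "emap n k (yop n k T Ts s t (xprime n k T Ts s t)) \<noteq> (\<lambda>_. 0)"
proof -
  note F = data_facts[OF D]
  have rr: "k - length s = r" using F by simp
  define a0 where "a0 = (\<lambda>p. if p \<in> set s then r + pos s p
                    else if p \<in> set (concat T) then row_of T p else 0)"
  define b0 where "b0 = (\<lambda>p. if p \<in> set t then r + pos t p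
                    else if p \<in> set (concat Ts) then n - row_of Ts p + 1 else 0)"
  define X where "X = (\<lambda>z. if z = (a0, b0) then (1::complex) else 0)"
  have xp: "xprime n k T Ts s t = X"
    unfolding xprime_def Let_def rr X_def a0_def b0_def by simp
  have pos_s: "pos s p \<in> {1..length s}" if "p \<in> set s" for p
    using that pos_nth[OF F(4)] by (auto simp: in_set_conv_nth)
  have pos_t: "pos t p \<in> {1..length t}" if "p \<in> set t" for p
    using that pos_nth[OF F(5)] by (auto simp: in_set_conv_nth)
  have rowT: "row_of T p \<in> {1..r}" if "p \<in> set (concat T)" for p
    using that row_of_bound[OF that F(8)] F(10) by auto
  have rowTs: "row_of Ts p \<in> {1..r}" if "p \<in> set (concat Ts)" for p
    using that row_of_bound[OF that F(11)] F(13) by auto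
  have sT: "p \<notin> set (concat T)" if "p \<in> set s" for p using that F(9) by auto
  have tTs: "p \<notin> set (concat Ts)" if "p \<in> set t" for p using that F(12) by auto
  have nsT: "p \<in> set (concat T)" if "p \<notin> set s" "p \<in> {1..k}" for p using that F(9) by auto
  have ntTs: "p \<in> set (concat Ts)" if "p \<notin> set t" "p \<in> {1..k}" for p using that F(12) by auto
  have idx0: "(a0, b0) \<in> idx n k"
  proof -
    have "a0 p \<in> {1..n} \<and> b0 p \<in> {1..n}" if p: "p \<in> {1..k}" for p
    proof -
      have "a0 p \<in> {1..n}"
      proof (cases "p \<in> set s")
        case True then show ?thesis using pos_s[OF True] F n2k by (auto simp: a0_def)
      next
        case False
        have "a0 p = row_of T p" using False nsT[OF False p] by (simp add: a0_def)
        then show ?thesis using rowT[OF nsT[OF False p]] F n2k by auto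
      qed
      moreover have "b0 p \<in> {1..n}"
      proof (cases "p \<in> set t")
        case True then show ?thesis using pos_t[OF True] F n2k by (auto simp: b0_def)
      next
        case False
        have "b0 p = n - row_of Ts p + 1" using False ntTs[OF False p] by (simp add: b0_def)
        then show ?thesis using rowTs[OF ntTs[OF False p]] F n2k by auto
      qed
      ultimately show ?thesis by blast
    qed
    moreover have "a0 p = 0 \<and> b0 p = 0" if p: "p \<notin> {1..k}" for p
      using p F by (auto simp: a0_def b0_def)
    ultimately show ?thesis by (auto simp: idx_def)
  qed
  have pairs: "\<forall>(i,j)\<in>set (zip s t). a0 i = b0 j \<and> i \<in> {1..k}"
  proof (clarify)
    fix i j assume "(i,j) \<in> set (zip s t)"
    then obtain l where l: "l < length s" "l < length t" "i = s!l" "j = t!l" by (auto simp: set_zip)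
    have "a0 i = r + (l+1)" using l pos_nth[OF F(4) l(1)] by (simp add: a0_def)
    moreover have "b0 j = r + (l+1)" using l pos_nth[OF F(5) l(2)] by (simp add: b0_def)
    moreover have "i \<in> {1..k}" using l F(6) nth_mem[OF l(1)] by blast
    ultimately show "a0 i = b0 j \<and> i \<in> {1..k}" by simp
  qed
  have differ: "\<forall>p\<in>{1..k}. a0 p \<noteq> b0 p"
  proof
    fix p assume p: "p \<in> {1..k}"
    show "a0 p \<noteq> b0 p"
    proof (cases "p \<in> set s")
      case sT': True
      show ?thesis
      proof (cases "p \<in> set t")
        case True
        obtain i where i: "i < length s" "p = s!i" using sT' by (auto simp: in_set_conv_nth)
        obtain j where j: "j < length t" "p = t!j" using True by (auto simp: in_set_conv_nth)
        have "i \<noteq> j" using cond i j F by auto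
        moreover have "a0 p = r + (i+1)" using i pos_nth[OF F(4) i(1)] by (simp add: a0_def)
        moreover have "b0 p = r + (j+1)" using j pos_nth[OF F(5) j(1)] by (simp add: b0_def)
        ultimately show ?thesis by simp
      next
        case False
        have "a0 p = r + pos s p" using sT' by (simp add: a0_def)
        moreover have "b0 p = n - row_of Ts p + 1" using False ntTs[OF False p] by (simp add: b0_def)
        ultimately show ?thesis using pos_s[OF sT'] rowTs[OF ntTs[OF False p]] F n2k by auto
      qed
    next
      case False
      have a: "a0 p = row_of T p" using False nsT[OF False p] by (simp add: a0_def)
      show ?thesis
      proof (cases "p \<in> set t")
        case True
        have "b0 p = r + pos t p" using True by (simp add: b0_def)
        then show ?thesis using a pos_t[OF True] rowT[OF nsT[OF False p]] by auto
      next
        case False': False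
        have "b0 p = n - row_of Ts p + 1" using False' ntTs[OF False' p] by (simp add: b0_def)
        then show ?thesis using a rowT[OF nsT[OF False p]] rowTs[OF ntTs[OF False' p]] F n2k by auto
      qed
    qed
  qed
  define C where "C = contr_list n k s t X"
  have fz: "fst ` set (zip s t) = set s" "snd ` set (zip s t) = set t"
  proof -
    have "fst ` set (zip s t) = set (map fst (zip s t))" by simp
    also have "\<dots> = set s" using F by simp
    finally show "fst ` set (zip s t) = set s" .
    have "snd ` set (zip s t) = set (map snd (zip s t))" by simp
    also have "\<dots> = set t" using F by simp
    finally show "snd ` set (zip s t) = set t" .
  qed
  have CQ: "Qs (set s) (set t) a0 b0 C" "C (a0, b0) = 1"
    using contr_foldr_val[of "zip s t" a0 b0 k n] F pairs idx0 fz
    unfolding C_def contr_list_def X_def by auto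
  have HA: "\<forall>p\<in>set (concat T). a0 p = id (row_of T p)" using sT by (auto simp: a0_def)
  have HB: "\<forall>p\<in>set (concat Ts). b0 p = (\<lambda>x. n - x + 1) (row_of Ts p)" using tTs by (auto simp: b0_def)
  have injB: "inj_on (\<lambda>x. n - x + 1) {1..length Ts}" using F n2k by (auto simp: inj_on_def)
  have trm: "C (a0 \<circ> (\<rho> \<circ> \<gamma>), b0 \<circ> (\<rho>' \<circ> \<gamma>')) = (if \<gamma>' = id then (if \<gamma> = id then 1 else 0) else 0)"
    if g: "\<rho> \<in> row_group T" "\<gamma> \<in> col_group T" "\<rho>' \<in> row_group Ts" "\<gamma>' \<in> col_group Ts" for \<rho> \<gamma> \<rho>' \<gamma>'
  proof -
    have ra: "a0 \<circ> \<rho> = a0" using row_inv[OF F(8) g(1) HA] .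
    have rb: "b0 \<circ> \<rho>' = b0" using row_inv[OF F(11) g(3) HB] .
    show ?thesis
    proof (cases "\<gamma> = id \<and> \<gamma>' = id")
      case True
      then show ?thesis using ra rb CQ(2) by simp
    next
      case False
      have "C (a0 \<circ> (\<rho> \<circ> \<gamma>), b0 \<circ> (\<rho>' \<circ> \<gamma>')) = 0"
      proof (rule ccontr)
        assume "C (a0 \<circ> (\<rho> \<circ> \<gamma>), b0 \<circ> (\<rho>' \<circ> \<gamma>')) \<noteq> 0"
        then have off: "\<forall>p. p \<notin> set s \<longrightarrow> (a0 \<circ> (\<rho> \<circ> \<gamma>)) p = a0 p"
          "\<forall>p. p \<notin> set t \<longrightarrow> (b0 \<circ> (\<rho>' \<circ> \<gamma>')) p = b0 p"
          using CQ(1) unfolding Qs_def by blast+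
        have pm: "\<rho> \<circ> \<gamma> permutes set (concat T)"
          using permutes_compose[OF col_group_perm[OF g(2)] row_group_perm[OF g(1)]] .
        have pm': "\<rho>' \<circ> \<gamma>' permutes set (concat Ts)"
          using permutes_compose[OF col_group_perm[OF g(4)] row_group_perm[OF g(3)]] .
        have "a0 \<circ> (\<rho> \<circ> \<gamma>) = a0"
        proof
          fix p show "(a0 \<circ> (\<rho> \<circ> \<gamma>)) p = a0 p"
            using off(1) permutes_not_in[OF pm sT] by (cases "p \<in> set s") auto
        qed
        then have "a0 \<circ> \<gamma> = a0" using ra by (metis comp_assoc)
        then have "\<gamma> = id" using col_id[OF F(8) g(2) HA] by simp
        have "b0 \<circ> (\<rho>' \<circ> \<gamma>') = b0"
        proof
          fix p show "(b0 \<circ> (\<rho>' \<circ> \<gamma>')) p = b0 p"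
            using off(2) permutes_not_in[OF pm' tTs] by (cases "p \<in> set t") auto
        qed
        then have "b0 \<circ> \<gamma>' = b0" using rb by (metis comp_assoc)
        then have "\<gamma>' = id" using col_id[OF F(11) g(4) HB injB] by simp
        with \<open>\<gamma> = id\<close> False show False by simp
      qed
      then show ?thesis using False by auto
    qed
  qed
  have inner: "youngVs Ts C (a0 \<circ> (\<rho> \<circ> \<gamma>), b0) = of_nat (card (row_group Ts)) * (if \<gamma> = id then 1 else 0)"
    if g: "\<rho> \<in> row_group T" "\<gamma> \<in> col_group T" for \<rho> \<gamma>
  proof -
    have "youngVs Ts C (a0 \<circ> (\<rho> \<circ> \<gamma>), b0) = (\<Sum>\<rho>'\<in>row_group Ts. \<Sum>\<gamma>'\<in>col_group Ts.
       of_int (sign \<gamma>') * C (a0 \<circ> (\<rho> \<circ> \<gamma>), b0 \<circ> (\<rho>' \<circ> \<gamma>')))" by (simp add: youngVs_def)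
    also have "\<dots> = (\<Sum>\<rho>'\<in>row_group Ts. \<Sum>\<gamma>'\<in>col_group Ts.
       of_int (sign \<gamma>') * (if \<gamma>' = id then (if \<gamma> = id then 1 else 0) else 0))"
      using trm g by (intro sum.cong refl) auto
    also have "\<dots> = (\<Sum>\<rho>'\<in>row_group Ts. (if \<gamma> = id then 1 else 0))"
      using sum_sign_delta[OF groups_fin(2,4)] by simp
    finally show ?thesis by simp
  qed
  have "yop n k T Ts s t X (a0, b0) = (\<Sum>\<rho>\<in>row_group T. \<Sum>\<gamma>\<in>col_group T.
       of_int (sign \<gamma>) * youngVs Ts C (a0 \<circ> (\<rho> \<circ> \<gamma>), b0))"
    by (simp add: yop_def youngV_def C_def)
  also have "\<dots> = (\<Sum>\<rho>\<in>row_group T. \<Sum>\<gamma>\<in>col_group T.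
       of_int (sign \<gamma>) * (if \<gamma> = id then of_nat (card (row_group Ts)) else 0))"
    using inner by (intro sum.cong refl) auto
  also have "\<dots> = of_nat (card (row_group T)) * of_nat (card (row_group Ts))"
    using sum_sign_delta[OF groups_fin(2,4)] by simp
  finally have val: "yop n k T Ts s t X (a0, b0) = of_nat (card (row_group T)) * of_nat (card (row_group Ts))" .
  have "card (row_group T) \<noteq> 0" "card (row_group Ts) \<noteq> 0"
    using groups_fin(1,3) by (auto simp: card_eq_0_iff)
  then have "yop n k T Ts s t X (a0, b0) \<noteq> 0" using val by simp
  then have "emap n k (yop n k T Ts s t X) (a0, b0) \<noteq> 0" using emap_fix[OF differ] by simp
  then show ?thesis using xp by force
qed

lemma main1:
  assumes n2k: "2 * k \<le> n" and D: "data_ok n k r s t lam mu T Ts"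
  shows "emap n k (yop n k T Ts s t (xprime n k T Ts s t)) \<noteq> (\<lambda>_. 0) \<longleftrightarrow> (\<forall>i < k - r. s ! i \<noteq> t ! i)"
proof
  assume ne: "emap n k (yop n k T Ts s t (xprime n k T Ts s t)) \<noteq> (\<lambda>_. 0)"
  show "\<forall>i < k - r. s ! i \<noteq> t ! i"
  proof (rule ccontr)
    assume "\<not> (\<forall>i < k - r. s ! i \<noteq> t ! i)"
    then obtain i where i: "i < k - r" "s ! i = t ! i" by auto
    note F = data_facts[OF D]
    define p where "p = s ! i"
    have ps: "p \<in> set s" unfolding p_def using i F by (intro nth_mem) simp
    have pt: "p \<in> set t" using nth_mem[of i t] i F by (simp add: p_def)
    have pk: "p \<in> {1..k}" using ps F by auto
    have n0: "n > 0" using pk n2k by auto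
    have "(p,p) \<in> set (zip s t)" unfolding in_set_zip p_def using i F
      by (intro exI[of _ i]) simp
    then have P0: "Pp n k p (contr_list n k s t (xprime n k T Ts s t))"
      unfolding contr_list_def using contr_foldr_Pp[OF pk] F by simp
    have a1: "p \<notin> set (concat Ts)" using F(12) pt by blast
    have a2: "set (concat Ts) \<subseteq> {1..k}" using F(12) by blast
    have a3: "p \<notin> set (concat T)" using F(9) ps by blast
    have a4: "set (concat T) \<subseteq> {1..k}" using F(9) by blast
    have "Pp n k p (yop n k T Ts s t (xprime n k T Ts s t))"
      unfolding yop_def by (rule youngV_Pp[OF a3 a4 youngVs_Pp[OF a1 a2 P0]])
    then show False using emap_kill[OF pk n0] ne by blast
  qed
next
  assume "\<forall>i < k - r. s ! i \<noteq> t ! i"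
  then show "emap n k (yop n k T Ts s t (xprime n k T Ts s t)) \<noteq> (\<lambda>_. 0)"
    using nonzero_dir[OF n2k D] by blast
qed

definition lin :: "(tens \<Rightarrow> tens) \<Rightarrow> bool" where
  "lin f \<longleftrightarrow> (\<forall>(F::tens set) c \<phi>. finite F \<longrightarrow>
      f (\<lambda>z. \<Sum>v\<in>F. c v * \<phi> v z) = (\<lambda>z. \<Sum>v\<in>F. c v * f (\<phi> v) z))"

lemma lin_contr: "lin (contr n k i j)"
  unfolding lin_def
proof (intro allI impI ext, clarify)
  fix F :: "tens set" and c \<phi> a b
  assume "finite F"
  show "contr n k i j (\<lambda>z. \<Sum>v\<in>F. c v * \<phi> v z) (a, b) = (\<Sum>v\<in>F. c v * contr n k i j (\<phi> v) (a, b))"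
  proof (cases "(a,b) \<in> idx n k \<and> a i = b j")
    case True
    then have "contr n k i j (\<lambda>z. \<Sum>v\<in>F. c v * \<phi> v z) (a, b) = (\<Sum>m\<in>{1..n}. \<Sum>v\<in>F. c v * \<phi> v (a(i := m), b(j := m)))"
      by (simp add: contr_def)
    also have "\<dots> = (\<Sum>v\<in>F. \<Sum>m\<in>{1..n}. c v * \<phi> v (a(i := m), b(j := m)))"
      by (rule sum.swap)
    also have "\<dots> = (\<Sum>v\<in>F. c v * contr n k i j (\<phi> v) (a, b))"
      using True by (simp add: contr_def sum_distrib_left)
    finally show ?thesis .
  next
    case False
    then show ?thesis by (auto simp: contr_def)
  qed
qed

lemma linD:
  fixes F :: "tens set"
  assumes "lin f" "finite F"
  shows "f (\<lambda>z. \<Sum>v\<in>F. c v * \<phi> v z) = (\<lambda>z. \<Sum>v\<in>F. c v * f (\<phi> v) z)"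
  using assms(1)[unfolded lin_def, rule_format, OF assms(2)] .

lemma linI:
  assumes "\<And>(F::tens set) c \<phi>. finite F \<Longrightarrow> f (\<lambda>z. \<Sum>v\<in>F. c v * \<phi> v z) = (\<lambda>z. \<Sum>v\<in>F. c v * f (\<phi> v) z)"
  shows "lin f"
  unfolding lin_def by (intro allI impI) (rule assms)

lemma lin_omp: "lin (one_minus_p n k q)"
proof (rule linI, rule ext)
  fix F :: "tens set" and c \<phi> z
  assume f: "finite F"
  have e: "contr n k q q (\<lambda>z. \<Sum>v\<in>F. c v * \<phi> v z) z = (\<Sum>v\<in>F. c v * contr n k q q (\<phi> v) z)"
    using linD[OF lin_contr f] by metis
  have "one_minus_p n k q (\<lambda>z. \<Sum>v\<in>F. c v * \<phi> v z) z
      = (\<Sum>v\<in>F. c v * \<phi> v z) - 1 / of_nat n * (\<Sum>v\<in>F. c v * contr n k q q (\<phi> v) z)"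
    by (simp add: one_minus_p_def e)
  also have "\<dots> = (\<Sum>v\<in>F. c v * \<phi> v z - 1 / of_nat n * (c v * contr n k q q (\<phi> v) z))"
    by (simp add: sum_subtractf sum_distrib_left)
  also have "\<dots> = (\<Sum>v\<in>F. c v * one_minus_p n k q (\<phi> v) z)"
    by (rule sum.cong) (simp_all add: one_minus_p_def right_diff_distrib mult.left_commute)
  finally show "one_minus_p n k q (\<lambda>z. \<Sum>v\<in>F. c v * \<phi> v z) z = (\<Sum>v\<in>F. c v * one_minus_p n k q (\<phi> v) z)" .
qed

lemma lin_foldr: "lin (\<lambda>x. foldr (one_minus_p n k) L x)"
proof (induction L)
  case Nil then show ?case by (simp add: lin_def)
next
  case (Cons q L)
  show ?case unfolding lin_def
  proof (intro allI impI)
    fix F :: "tens set" and c \<phi>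
    assume f: "finite F"
    have "foldr (one_minus_p n k) L (\<lambda>z. \<Sum>v\<in>F. c v * \<phi> v z) = (\<lambda>z. \<Sum>v\<in>F. c v * foldr (one_minus_p n k) L (\<phi> v) z)"
      using linD[OF Cons f] by simp
    moreover have "one_minus_p n k q (\<lambda>z. \<Sum>v\<in>F. c v * foldr (one_minus_p n k) L (\<phi> v) z)
       = (\<lambda>z. \<Sum>v\<in>F. c v * one_minus_p n k q (foldr (one_minus_p n k) L (\<phi> v)) z)"
      using linD[OF lin_omp f] by simp
    ultimately show "foldr (one_minus_p n k) (q # L) (\<lambda>z. \<Sum>v\<in>F. c v * \<phi> v z) =
        (\<lambda>z. \<Sum>v\<in>F. c v * foldr (one_minus_p n k) (q # L) (\<phi> v) z)" by simp
  qed
qed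

lemma emap_lin:
  fixes F :: "tens set"
  assumes "finite F"
  shows "emap n k (\<lambda>z. \<Sum>v\<in>F. c v * \<phi> v z) = (\<lambda>z. \<Sum>v\<in>F. c v * emap n k (\<phi> v) z)"
  unfolding emap_def by (rule linD[OF lin_foldr assms])

lemma span_zero: "(\<lambda>_. 0) \<in> lin_span S"
  unfolding lin_span_def by (rule CollectI, rule exI[of _ "{}"]) auto

lemma span_gen: "v \<in> S \<Longrightarrow> v \<in> lin_span S"
  unfolding lin_span_def by (rule CollectI, rule exI[of _ "{v}"], rule exI[of _ "\<lambda>_. 1"]) auto

lemma spanE:
  assumes "f \<in> lin_span S"
  obtains F c where "finite F" "F \<subseteq> S" "f = (\<lambda>z. \<Sum>v\<in>F. c v * v z)"
  using assms unfolding lin_span_def by (elim CollectE exE conjE) (rule that)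

lemma span_add:
  assumes "f \<in> lin_span S" "g \<in> lin_span S"
  shows "(\<lambda>z. f z + g z) \<in> lin_span S"
proof -
  obtain F1 c1 where 1: "finite F1" "F1 \<subseteq> S" "f = (\<lambda>z. \<Sum>v\<in>F1. c1 v * v z)"
    using assms(1) by (rule spanE)
  obtain F2 c2 where 2: "finite F2" "F2 \<subseteq> S" "g = (\<lambda>z. \<Sum>v\<in>F2. c2 v * v z)"
    using assms(2) by (rule spanE)
  define c where "c v = (if v \<in> F1 then c1 v else 0) + (if v \<in> F2 then c2 v else 0)" for v
  have "(\<lambda>z. f z + g z) = (\<lambda>z. \<Sum>v\<in>F1 \<union> F2. c v * v z)"
  proof
    fix z
    have fin: "finite (F1 \<union> F2)" using 1 2 by simp
    have "(\<Sum>v\<in>F1 \<union> F2. c v * v z) = (\<Sum>v\<in>F1 \<union> F2. (if v \<in> F1 then c1 v * v z else 0))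
        + (\<Sum>v\<in>F1 \<union> F2. (if v \<in> F2 then c2 v * v z else 0))"
      unfolding sum.distrib[symmetric] by (rule sum.cong) (auto simp: c_def distrib_right)
    also have "\<dots> = (\<Sum>v\<in>(F1 \<union> F2) \<inter> F1. c1 v * v z) + (\<Sum>v\<in>(F1 \<union> F2) \<inter> F2. c2 v * v z)"
      by (simp only: sum.inter_restrict[OF fin])
    finally have eq0: "(\<Sum>v\<in>F1 \<union> F2. c v * v z) = (\<Sum>v\<in>(F1 \<union> F2) \<inter> F1. c1 v * v z) + (\<Sum>v\<in>(F1 \<union> F2) \<inter> F2. c2 v * v z)" .
    have "(F1 \<union> F2) \<inter> F1 = F1" "(F1 \<union> F2) \<inter> F2 = F2" by auto
    with eq0 have "(\<Sum>v\<in>F1 \<union> F2. c v * v z) = (\<Sum>v\<in>F1. c1 v * v z) + (\<Sum>v\<in>F2. c2 v * v z)" by simp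
    then show "f z + g z = (\<Sum>v\<in>F1 \<union> F2. c v * v z)" using 1 2 by simp
  qed
  then show ?thesis unfolding lin_span_def using 1 2
    by (intro CollectI exI[of _ "F1 \<union> F2"] exI[of _ c]) simp
qed

lemma span_smult:
  assumes "f \<in> lin_span S"
  shows "(\<lambda>z. a * f z) \<in> lin_span S"
proof -
  obtain F c where 1: "finite F" "F \<subseteq> S" "f = (\<lambda>z. \<Sum>v\<in>F. c v * v z)"
    using assms(1) by (rule spanE)
  have "(\<lambda>z. a * f z) = (\<lambda>z. \<Sum>v\<in>F. (a * c v) * v z)"
    using 1 by (simp add: sum_distrib_left mult.assoc)
  then show ?thesis unfolding lin_span_def using 1
    by (intro CollectI exI[of _ F] exI[of _ "\<lambda>v. a * c v"]) simp
qed

lemma span_sum: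
  assumes "finite F" "\<forall>v\<in>F. \<phi> v \<in> lin_span S"
  shows "(\<lambda>z. \<Sum>v\<in>F. c v * \<phi> v z) \<in> lin_span S"
  using assms
proof (induction F rule: finite_induct)
  case empty then show ?case using span_zero by simp
next
  case (insert x F)
  have eq: "(\<lambda>z. \<Sum>v\<in>insert x F. c v * \<phi> v z) = (\<lambda>z. c x * \<phi> x z + (\<Sum>v\<in>F. c v * \<phi> v z))"
    using insert(1,2) by (simp add: sum.insert)
  have mem: "(\<lambda>z. c x * \<phi> x z + (\<Sum>v\<in>F. c v * \<phi> v z)) \<in> lin_span S"
  proof -
    have "\<phi> x \<in> lin_span S" using insert.prems by simp
    then have "(\<lambda>z. c x * \<phi> x z) \<in> lin_span S" by (rule span_smult)
    moreover have "(\<lambda>z. \<Sum>v\<in>F. c v * \<phi> v z) \<in> lin_span S" using insert by simp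
    ultimately show ?thesis by (rule span_add)
  qed
  show ?case unfolding eq by (rule mem)
qed


theorem lemma3p4:
  fixes n k :: nat
  assumes "2 * k \<le> n"
  shows "(\<forall>r s t lam mu T Ts. data_ok n k r s t lam mu T Ts \<longrightarrow>
           (emap n k (yop n k T Ts s t (xprime n k T Ts s t)) \<noteq> (\<lambda>_. 0) \<longleftrightarrow>
            (\<forall>i < k - r. s ! i \<noteq> t ! i))) \<and>
         (\<forall>r lam mu. r \<le> k \<and> is_partition r lam \<and> is_partition r mu \<longrightarrow>
           ((\<exists>v\<in>Mlm n k lam mu. emap n k v \<noteq> (\<lambda>_. 0)) \<longleftrightarrow>
            (\<exists>s t T Ts. data_ok n k r s t lam mu T Ts \<and> (\<forall>i < k - r. s ! i \<noteq> t ! i)))) \<and>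
         (\<forall>r lam mu. (\<exists>s t T Ts. data_ok n k r s t lam mu T Ts \<and> (\<forall>i < k - r. s ! i \<noteq> t ! i)) \<longrightarrow>
           emap n k ` Mlm n k lam mu =
           lin_span {emap n k (yop n k T Ts s t (xprime n k T Ts s t)) | s t T Ts.
                       data_ok n k r s t lam mu T Ts \<and>
                       emap n k (yop n k T Ts s t (xprime n k T Ts s t)) \<noteq> (\<lambda>_. 0)})"
proof -
  note M1 = main1[OF assms]
  have C2: "(\<exists>v\<in>Mlm n k lam mu. emap n k v \<noteq> (\<lambda>_. 0)) \<longleftrightarrow>
            (\<exists>s t T Ts. data_ok n k r s t lam mu T Ts \<and> (\<forall>i < k - r. s ! i \<noteq> t ! i))"
    if H: "r \<le> k \<and> is_partition r lam \<and> is_partition r mu" for r lam mu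
  proof
    have sl: "sum_list lam = r" using H by (simp add: is_partition_def)
    assume "\<exists>v\<in>Mlm n k lam mu. emap n k v \<noteq> (\<lambda>_. 0)"
    then obtain v where v: "v \<in> Mlm n k lam mu" "emap n k v \<noteq> (\<lambda>_. 0)" by blast
    from v(1) obtain F c where Fc: "finite F" "F \<subseteq> {yop n k T Ts s t (xprime n k T Ts s t) | s t T Ts.
       data_ok n k (sum_list lam) s t lam mu T Ts}" "v = (\<lambda>z. \<Sum>u\<in>F. c u * u z)"
      unfolding Mlm_def by (rule spanE)
    have ev: "emap n k v = (\<lambda>z. \<Sum>u\<in>F. c u * emap n k u z)"
      using emap_lin[OF Fc(1), of n k c "\<lambda>u. u"] Fc(3) by simp
    have "\<exists>u\<in>F. emap n k u \<noteq> (\<lambda>_. 0)"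
    proof (rule ccontr)
      assume "\<not> (\<exists>u\<in>F. emap n k u \<noteq> (\<lambda>_. 0))"
      then have "emap n k v = (\<lambda>_. 0)" using ev by simp
      then show False using v(2) by simp
    qed
    then obtain u where u: "u \<in> F" "emap n k u \<noteq> (\<lambda>_. 0)" by blast
    then obtain s t T Ts where "u = yop n k T Ts s t (xprime n k T Ts s t)" "data_ok n k r s t lam mu T Ts"
      using Fc(2) sl by blast
    then show "\<exists>s t T Ts. data_ok n k r s t lam mu T Ts \<and> (\<forall>i < k - r. s ! i \<noteq> t ! i)"
      using M1 u(2) by blast
  next
    have sl: "sum_list lam = r" using H by (simp add: is_partition_def)
    assume "\<exists>s t T Ts. data_ok n k r s t lam mu T Ts \<and> (\<forall>i < k - r. s ! i \<noteq> t ! i)"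
    then obtain s t T Ts where D: "data_ok n k r s t lam mu T Ts" "\<forall>i < k - r. s ! i \<noteq> t ! i" by blast
    have "yop n k T Ts s t (xprime n k T Ts s t) \<in> Mlm n k lam mu"
      unfolding Mlm_def using D(1) sl by (intro span_gen) blast
    then show "\<exists>v\<in>Mlm n k lam mu. emap n k v \<noteq> (\<lambda>_. 0)" using M1[OF D(1)] D(2) by blast
  qed
  have C3: "emap n k ` Mlm n k lam mu =
           lin_span {emap n k (yop n k T Ts s t (xprime n k T Ts s t)) | s t T Ts.
                       data_ok n k r s t lam mu T Ts \<and>
                       emap n k (yop n k T Ts s t (xprime n k T Ts s t)) \<noteq> (\<lambda>_. 0)}"
    if H: "\<exists>s t T Ts. data_ok n k r s t lam mu T Ts \<and> (\<forall>i < k - r. s ! i \<noteq> t ! i)" for r lam mu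
  proof -
    have sl: "sum_list lam = r" using H by (auto simp: data_ok_def is_partition_def)
    define G where "G = {yop n k T Ts s t (xprime n k T Ts s t) | s t T Ts.
       data_ok n k (sum_list lam) s t lam mu T Ts}"
    define G' where "G' = {emap n k (yop n k T Ts s t (xprime n k T Ts s t)) | s t T Ts.
                       data_ok n k r s t lam mu T Ts \<and>
                       emap n k (yop n k T Ts s t (xprime n k T Ts s t)) \<noteq> (\<lambda>_. 0)}"
    have "emap n k ` lin_span G = lin_span G'"
    proof
      show "emap n k ` lin_span G \<subseteq> lin_span G'"
      proof
        fix w assume "w \<in> emap n k ` lin_span G"
        then obtain v where v: "v \<in> lin_span G" "w = emap n k v" by blast
        from v(1) obtain F c where Fc: "finite F" "F \<subseteq> G" "v = (\<lambda>z. \<Sum>u\<in>F. c u * u z)"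
          by (rule spanE)
        have ev: "w = (\<lambda>z. \<Sum>u\<in>F. c u * emap n k u z)"
          using emap_lin[OF Fc(1), of n k c "\<lambda>u. u"] Fc(3) v(2) by simp
        have "\<forall>u\<in>F. emap n k u \<in> lin_span G'"
        proof
          fix u assume "u \<in> F"
          then have uG: "u \<in> G" using Fc(2) by blast
          show "emap n k u \<in> lin_span G'"
          proof (cases "emap n k u = (\<lambda>_. 0)")
            case True then show ?thesis using span_zero by simp
          next
            case False
            then have "emap n k u \<in> G'" using uG sl unfolding G_def G'_def by blast
            then show ?thesis by (rule span_gen)
          qed
        qed
        then show "w \<in> lin_span G'" unfolding ev by (rule span_sum[OF Fc(1)])
      qed
    next
      show "lin_span G' \<subseteq> emap n k ` lin_span G"
      proof
        fix w assume "w \<in> lin_span G'"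
        then obtain F c where Fc: "finite F" "F \<subseteq> G'" "w = (\<lambda>z. \<Sum>u\<in>F. c u * u z)"
          by (rule spanE)
        have ex: "\<exists>g. g \<in> G \<and> u = emap n k g" if "u \<in> G'" for u
          using that sl unfolding G_def G'_def by blast
        define \<phi> where "\<phi> u = (SOME g. g \<in> G \<and> u = emap n k g)" for u
        have ph: "\<phi> u \<in> G \<and> u = emap n k (\<phi> u)" if "u \<in> F" for u
        proof -
          have "\<exists>g. g \<in> G \<and> u = emap n k g" using ex that Fc(2) by blast
          then show ?thesis unfolding \<phi>_def by (rule someI_ex)
        qed
        have "w = (\<lambda>z. \<Sum>u\<in>F. c u * emap n k (\<phi> u) z)"
          unfolding Fc(3) using ph by (intro ext sum.cong refl) metis
        also have "\<dots> = emap n k (\<lambda>z. \<Sum>u\<in>F. c u * \<phi> u z)"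
          using emap_lin[OF Fc(1)] by simp
        finally have w: "w = emap n k (\<lambda>z. \<Sum>u\<in>F. c u * \<phi> u z)" .
        have "(\<lambda>z. \<Sum>u\<in>F. c u * \<phi> u z) \<in> lin_span G"
          by (rule span_sum[OF Fc(1)]) (use ph span_gen in blast)
        then show "w \<in> emap n k ` lin_span G" using w by blast
      qed
    qed
    then show ?thesis unfolding Mlm_def G_def G'_def .
  qed
  show ?thesis
  proof (intro conjI allI impI)
    fix r s t lam mu T Ts assume "data_ok n k r s t lam mu T Ts"
    then show "emap n k (yop n k T Ts s t (xprime n k T Ts s t)) \<noteq> (\<lambda>_. 0) \<longleftrightarrow> (\<forall>i < k - r. s ! i \<noteq> t ! i)"
      by (rule M1)
  next
    fix r lam mu assume "r \<le> k \<and> is_partition r lam \<and> is_partition r mu"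
    then show "(\<exists>v\<in>Mlm n k lam mu. emap n k v \<noteq> (\<lambda>_. 0)) \<longleftrightarrow>
            (\<exists>s t T Ts. data_ok n k r s t lam mu T Ts \<and> (\<forall>i < k - r. s ! i \<noteq> t ! i))"
      by (rule C2)
  next
    fix r lam mu assume "\<exists>s t T Ts. data_ok n k r s t lam mu T Ts \<and> (\<forall>i < k - r. s ! i \<noteq> t ! i)"
    then show "emap n k ` Mlm n k lam mu =
           lin_span {emap n k (yop n k T Ts s t (xprime n k T Ts s t)) | s t T Ts.
                       data_ok n k r s t lam mu T Ts \<and>
                       emap n k (yop n k T Ts s t (xprime n k T Ts s t)) \<noteq> (\<lambda>_. 0)}"
      by (rule C3)
  qed
qed

end
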